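(* Let $S$ be a reflective numerical semigroup with $\mathrm{g}(S)=g\ge1$ and $\mathrm{m}(S)=a$. Then: $S$ is symmetric if and only if $g\equiv1\pmod a$; $S$ is pseudo-symmetric if and only if $g\equiv2\pmod a$; and $S$ is irreducible if and only if $g\equiv 1$ or $g\equiv 2\pmod a$.
   Context: A numerical semigroup is a submonoid $S$ of $(\mathbb{N}_0,+)$ with finite complement; $\mathrm{g}(S)$ is the number of its gaps (elements of $\mathbb{N}_0\setminus S$), $\mathrm{F}(S)$ its largest gap, and $\mathrm{m}(S)$ its smallest positive element. $S$ is symmetric if for every $z\in\mathbb{Z}$ exactly one of $z$ and $\mathrm{F}(S)-z$ lies in $S$. $S$ is pseudo-symmetric if $\mathrm{F}(S)$ is even and for every $z\in\mathbb{Z}\setminus\{\mathrm{F}(S)/2\}$ exactly one of $z$ and $\mathrm{F}(S)-z$ lies in $S$. $S$ is irreducible if it is not the intersection of two numerical semigroups properly containing $S$. A numerical semigroup $S$ of genus $g\ge1$ is called reflective if for every $z\in\{0,1,\dots,g-1\}$ exactly one of $z$ and $z+g$ belongs to $S$. *)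

theory Defs
  imports Main "HOL-Number_Theory.Cong"
begin

definition numerical_semigroup :: "nat set \<Rightarrow> bool" where
  "numerical_semigroup S \<longleftrightarrow> 0 \<in> S \<and> (\<forall>x\<in>S. \<forall>y\<in>S. x + y \<in> S) \<and> finite (UNIV - S)"

definition gaps :: "nat set \<Rightarrow> nat set" where
  "gaps S = UNIV - S"

definition genus :: "nat set \<Rightarrow> nat" where
  "genus S = card (gaps S)"

text \<open>Frobenius number (largest gap); only used when S has a gap.\<close>
definition frobenius :: "nat set \<Rightarrow> int" where
  "frobenius S = int (Max (gaps S))"

definition multiplicity :: "nat set \<Rightarrow> nat" where
  "multiplicity S = (LEAST x. x \<in> S \<and> 0 < x)"

definition int_mem :: "int \<Rightarrow> nat set \<Rightarrow> bool" where
  "int_mem z S \<longleftrightarrow> 0 \<le> z \<and> nat z \<in> S"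

definition symmetric_ns :: "nat set \<Rightarrow> bool" where
  "symmetric_ns S \<longleftrightarrow> (\<forall>z::int. int_mem z S \<noteq> int_mem (frobenius S - z) S)"

definition pseudo_symmetric_ns :: "nat set \<Rightarrow> bool" where
  "pseudo_symmetric_ns S \<longleftrightarrow> even (frobenius S) \<and>
     (\<forall>z::int. z \<noteq> frobenius S div 2 \<longrightarrow> int_mem z S \<noteq> int_mem (frobenius S - z) S)"

definition irreducible_ns :: "nat set \<Rightarrow> bool" where
  "irreducible_ns S \<longleftrightarrow> numerical_semigroup S \<and>
     \<not> (\<exists>S1 S2. numerical_semigroup S1 \<and> numerical_semigroup S2 \<and>
                S \<subset> S1 \<and> S \<subset> S2 \<and> S = S1 \<inter> S2)"

definition reflective :: "nat set \<Rightarrow> bool" where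
  "reflective S \<longleftrightarrow> numerical_semigroup S \<and> genus S \<ge> 1 \<and>
     (\<forall>z < genus S. (z \<in> S) \<noteq> (z + genus S \<in> S))"

end

theory Submission
  imports Defs
begin

lemma int_mem_nat: "int_mem (int x) S \<longleftrightarrow> x \<in> S" by (simp add: int_mem_def)

lemma outside_lemma:
  assumes up: "\<And>x. x > F \<Longrightarrow> x \<in> S"
  shows "w < 0 \<Longrightarrow> int_mem w S \<noteq> int_mem (int F - w) S"
    and "w > int F \<Longrightarrow> int_mem w S \<noteq> int_mem (int F - w) S"
proof -
  assume w: "w < 0"
  hence n: "nat (int F - w) > F" by simp
  have "nat (int F - w) \<in> S" by (rule up[OF n])
  hence "int_mem (int F - w) S" using w unfolding int_mem_def by simp
  moreover have "\<not> int_mem w S" using w unfolding int_mem_def by simp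
  ultimately show "int_mem w S \<noteq> int_mem (int F - w) S" by blast
next
  assume w: "w > int F"
  hence n: "nat w > F" by simp
  have "nat w \<in> S" by (rule up[OF n])
  hence "int_mem w S" using w unfolding int_mem_def by simp
  moreover have "\<not> int_mem (int F - w) S" using w unfolding int_mem_def by simp
  ultimately show "int_mem w S \<noteq> int_mem (int F - w) S" by blast
qed

lemma inside_lemma:
  assumes "\<not> w < 0" "\<not> w > int F"
  obtains x where "w = int x" "x \<le> F" "int F - w = int (F - x)"
proof -
  have "w = int (nat w)" "nat w \<le> F" "int F - w = int (F - nat w)" using assms by auto
  thus ?thesis using that by blast
qed

lemma sym_iff:
  assumes fr: "frobenius S = int F" and up: "\<And>x. x > F \<Longrightarrow> x \<in> S"
  shows "symmetric_ns S \<longleftrightarrow> (\<forall>x\<le>F. (x \<in> S) \<noteq> (F - x \<in> S))"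
proof
  assume p: "symmetric_ns S"
  show "\<forall>x\<le>F. (x \<in> S) \<noteq> (F - x \<in> S)"
  proof (intro allI impI)
    fix x assume x: "x \<le> F"
    have a: "int_mem (int x) S \<noteq> int_mem (int F - int x) S" using p unfolding symmetric_ns_def fr by (rule spec)
    have b: "int F - int x = int (F - x)" using x by simp
    have "int_mem (int x) S \<noteq> int_mem (int (F - x)) S" using a unfolding b .
    thus "(x \<in> S) \<noteq> (F - x \<in> S)" unfolding int_mem_nat .
  qed
next
  assume h: "\<forall>x\<le>F. (x \<in> S) \<noteq> (F - x \<in> S)"
  show "symmetric_ns S" unfolding symmetric_ns_def fr
  proof
    fix w :: int
    show "int_mem w S \<noteq> int_mem (int F - w) S"
    proof (cases "w < 0")
      case True
      thus ?thesis using outside_lemma[OF up] by blast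
    next
      case False
      show ?thesis
      proof (cases "w > int F")
        case True
        thus ?thesis using outside_lemma[OF up] by blast
      next
        case c: False
        obtain x where x: "w = int x" "x \<le> F" "int F - w = int (F - x)"
          using inside_lemma[OF False c] by blast
        have "(x \<in> S) \<noteq> (F - x \<in> S)" using h x(2) by blast
        thus ?thesis unfolding x(1) x(3)[unfolded x(1)] int_mem_nat .
      qed
    qed
  qed
qed

lemma pseudo_iff:
  assumes fr: "frobenius S = int F" and up: "\<And>x. x > F \<Longrightarrow> x \<in> S"
  shows "pseudo_symmetric_ns S \<longleftrightarrow> even F \<and> (\<forall>x\<le>F. x \<noteq> F div 2 \<longrightarrow> (x \<in> S) \<noteq> (F - x \<in> S))"
proof
  assume p: "pseudo_symmetric_ns S"
  have p2: "even (int F) \<and> (\<forall>z::int. z \<noteq> int F div 2 \<longrightarrow> int_mem z S \<noteq> int_mem (int F - z) S)"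
    using p unfolding pseudo_symmetric_ns_def fr .
  hence ev: "even F" by simp
  have "(x \<in> S) \<noteq> (F - x \<in> S)" if "x \<le> F" "x \<noteq> F div 2" for x
  proof -
    have "int x \<noteq> int F div 2" using that(2) by (simp add: zdiv_int)
    hence a: "int_mem (int x) S \<noteq> int_mem (int F - int x) S" using p2 by blast
    have b: "int F - int x = int (F - x)" using that by simp
    have "int_mem (int x) S \<noteq> int_mem (int (F - x)) S" using a unfolding b .
    thus ?thesis unfolding int_mem_nat .
  qed
  thus "even F \<and> (\<forall>x\<le>F. x \<noteq> F div 2 \<longrightarrow> (x \<in> S) \<noteq> (F - x \<in> S))" using ev by blast
next
  assume h: "even F \<and> (\<forall>x\<le>F. x \<noteq> F div 2 \<longrightarrow> (x \<in> S) \<noteq> (F - x \<in> S))"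
  show "pseudo_symmetric_ns S" unfolding pseudo_symmetric_ns_def fr
  proof (intro conjI allI impI)
    have "even F" using h by blast
    thus "even (int F)" by simp
    fix w :: int
    assume wne: "w \<noteq> int F div 2"
    show "int_mem w S \<noteq> int_mem (int F - w) S"
    proof (cases "w < 0")
      case True
      thus ?thesis using outside_lemma[OF up] by blast
    next
      case False
      show ?thesis
      proof (cases "w > int F")
        case True
        thus ?thesis using outside_lemma[OF up] by blast
      next
        case c: False
        obtain x where x: "w = int x" "x \<le> F" "int F - w = int (F - x)"
          using inside_lemma[OF False c] by blast
        have "x \<noteq> F div 2" using wne x(1) by (simp add: zdiv_int)
        hence "(x \<in> S) \<noteq> (F - x \<in> S)" using h x(2) by blast
        thus ?thesis unfolding x(1) x(3)[unfolded x(1)] int_mem_nat .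
      qed
    qed
  qed
qed

lemma irr_suff:
  assumes ns: "numerical_semigroup S" and nF: "F \<notin> S" and up: "\<And>x. x > F \<Longrightarrow> x \<in> S"
    and P: "\<And>x. x < F \<Longrightarrow> x \<notin> S \<Longrightarrow> F - x \<in> S \<or> 2*x = F"
  shows "irreducible_ns S"
proof -
  have key: "F \<in> T" if T: "numerical_semigroup T" "S \<subset> T" for T
  proof -
    obtain x where x: "x \<in> T" "x \<notin> S" using T by blast
    have "x \<le> F" using x up by (meson not_le)
    show ?thesis
    proof (cases "x = F")
      case True thus ?thesis using x by simp
    next
      case False
      hence "x < F" using \<open>x \<le> F\<close> by simp
      from P[OF this x(2)] show ?thesis
      proof
        assume "F - x \<in> S"
        hence "x + (F - x) \<in> T" using x T by (auto simp: numerical_semigroup_def)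
        thus ?thesis using \<open>x < F\<close> by simp
      next
        assume "2*x = F"
        moreover have "x + x \<in> T" using x T by (auto simp: numerical_semigroup_def)
        ultimately show ?thesis by (metis mult_2)
      qed
    qed
  qed
  show ?thesis unfolding irreducible_ns_def using ns key nF by blast
qed

locale rfl =
  fixes S :: "nat set" and g a :: nat
  assumes refl: "reflective S" and gdef: "genus S = g" and adef: "multiplicity S = a"
begin

lemma ns: "numerical_semigroup S" using refl by (simp add: reflective_def)
lemma g1: "g \<ge> 1" using refl gdef by (simp add: reflective_def)
lemma zero_in: "0 \<in> S" using ns by (simp add: numerical_semigroup_def)
lemma add_in: "x \<in> S \<Longrightarrow> y \<in> S \<Longrightarrow> x + y \<in> S" using ns by (simp add: numerical_semigroup_def)
lemma fin: "finite (UNIV - S)" using ns by (simp add: numerical_semigroup_def)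
lemma refl_pair: "z < g \<Longrightarrow> (z \<in> S) \<noteq> (z + g \<in> S)" using refl gdef by (simp add: reflective_def)

lemma big: assumes "x \<ge> 2*g" shows "x \<in> S"
proof (rule ccontr)
  assume nx: "x \<notin> S"
  let ?f = "\<lambda>z. if z\<in>S then z+g else z"
  have inj: "inj_on ?f {..<g}" by (auto simp: inj_on_def split: if_splits)
  have sub: "?f ` {..<g} \<subseteq> gaps S" using refl_pair by (auto simp: gaps_def)
  have "card (?f ` {..<g}) = g" using card_image[OF inj] by simp
  hence eq: "?f ` {..<g} = gaps S" using card_subset_eq[OF _ sub] fin gdef
    by (simp add: genus_def gaps_def)
  have "x \<in> gaps S" using nx by (simp add: gaps_def)
  then obtain z where "z < g" "x = ?f z" using eq by force
  then show False using assms by (auto split: if_splits)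
qed

lemma a_props: "a \<in> S" "0 < a" "\<And>y. y \<in> S \<Longrightarrow> 0 < y \<Longrightarrow> a \<le> y"
proof -
  have h: "2*g \<in> S \<and> 0 < 2*g" using big g1 by auto
  show "a \<in> S" "0 < a" using LeastI[of "\<lambda>x. x\<in>S \<and> 0<x", OF h] adef
    by (auto simp: multiplicity_def)
  show "\<And>y. y \<in> S \<Longrightarrow> 0 < y \<Longrightarrow> a \<le> y" using Least_le[of "\<lambda>x. x\<in>S \<and> 0<x"] adef
    by (auto simp: multiplicity_def)
qed

lemma mult_in: "k * a \<in> S"
  by (induction k) (auto simp: zero_in add_in a_props)

lemma a2: "a \<ge> 2"
proof (rule ccontr)
  assume "\<not> a \<ge> 2"
  hence "a = 1" using a_props by auto
  hence "\<And>n. n \<in> S" using mult_in by (metis mult.right_neutral)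
  hence "gaps S = {}" by (auto simp: gaps_def)
  thus False using gdef g1 by (simp add: genus_def)
qed

lemma low: assumes "x < g" shows "x \<in> S \<longleftrightarrow> a dvd x"
proof
  assume xs: "x \<in> S"
  show "a dvd x"
  proof (rule ccontr)
    assume nd: "\<not> a dvd x"
    define q where "q = x div a"
    define r where "r = x mod a"
    have "r > 0" using nd by (simp add: r_def dvd_eq_mod_eq_0)
    moreover have "r < a" using a_props by (simp add: r_def)
    ultimately have "r \<notin> S" using a_props(3) by force
    moreover have "r < g" using assms r_def by (meson le_trans mod_le_divisor mod_less_eq_dividend not_le)
    ultimately have "r + g \<in> S" using refl_pair by blast
    hence "q*a + (r + g) \<in> S" using add_in mult_in by blast
    moreover have "q*a + (r+g) = x + g" by (simp add: q_def r_def)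
    ultimately show False using refl_pair[OF assms] xs by simp
  qed
next
  assume "a dvd x"
  then obtain k where "x = k * a" by (metis dvdE mult.commute)
  thus "x \<in> S" using mult_in by simp
qed

lemma mid: assumes "g \<le> x" "x < 2*g" shows "x \<in> S \<longleftrightarrow> \<not> a dvd (x - g)"
proof -
  have "x - g < g" using assms by simp
  from refl_pair[OF this] low[OF this] show ?thesis using assms by auto
qed

definition r where "r = (g - 1) mod a"

lemma r_props: "r < a" "r \<le> g - 1" "a dvd (g - 1 - r)"
proof -
  show "r < a" using a_props by (simp add: r_def)
  show "r \<le> g - 1" by (simp add: r_def)
  show "a dvd (g - 1 - r)" by (simp add: r_def minus_mod_eq_mult_div)
qed

lemma top_gap: "2*g - 1 - r \<notin> S"
proof -
  have "g \<le> 2*g - 1 - r" "2*g - 1 - r < 2*g" using r_props g1 by auto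
  moreover have "2*g - 1 - r - g = g - 1 - r" by simp
  ultimately show ?thesis using mid r_props by simp
qed

lemma gaps_le: assumes "x \<notin> S" shows "x \<le> 2*g - 1 - r"
proof -
  have "x < 2*g" using big assms by (meson not_le)
  show ?thesis
  proof (cases "x < g")
    case True thus ?thesis using r_props by linarith
  next
    case False
    hence "a dvd (x - g)" using mid \<open>x < 2*g\<close> assms by simp
    then obtain k where k: "x - g = a * k" by (auto elim: dvdE)
    have "x - g \<le> g - 1" using \<open>x < 2*g\<close> by simp
    hence "k \<le> (g - 1) div a" using k a_props
      by (metis div_le_mono nonzero_mult_div_cancel_left not_gr_zero)
    hence "a * k \<le> a * ((g - 1) div a)" by simp
    also have "\<dots> = g - 1 - r" by (simp add: r_def minus_mod_eq_mult_div)
    finally show ?thesis using k False r_props g1 by linarith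
  qed
qed

lemma frob: "frobenius S = int (2*g - 1 - r)"
proof -
  have "finite (gaps S)" using fin by (simp add: gaps_def)
  moreover have "Max (gaps S) = 2*g - 1 - r"
    by (rule Max_eqI) (use fin gaps_le top_gap in \<open>auto simp: gaps_def\<close>)
  thus ?thesis by (simp add: frobenius_def)
qed

lemma dvd_sub_iff: "(a::nat) dvd m \<Longrightarrow> x \<le> m \<Longrightarrow> a dvd (m - x) \<longleftrightarrow> a dvd x"
proof -
  assume d: "a dvd m" and le: "x \<le> m"
  have e: "a dvd (m - x) + x" using d le by simp
  show ?thesis
  proof
    assume "a dvd (m - x)" thus "a dvd x" using e dvd_add_right_iff by blast
  next
    assume "a dvd x" thus "a dvd (m - x)" using e dvd_add_left_iff by blast
  qed
qed

lemma sym_nat: assumes "r = 0" "x \<le> 2*g - 1" shows "(x \<in> S) \<noteq> (2*g - 1 - x \<in> S)"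
proof -
  have d: "a dvd (g - 1)" using r_props assms by simp
  show ?thesis
  proof (cases "x < g")
    case True
    have "2*g - 1 - x - g = g - 1 - x" by simp
    moreover have "a dvd (g - 1 - x) \<longleftrightarrow> a dvd x" using dvd_sub_iff[OF d] True by simp
    ultimately show ?thesis using low[OF True] mid[of "2*g - 1 - x"] True g1 by auto
  next
    case False
    have lt: "2*g - 1 - x < g" using False g1 by simp
    have "a dvd (g - 1 - (2*g - 1 - x)) \<longleftrightarrow> a dvd (2*g - 1 - x)" using dvd_sub_iff[OF d] lt by simp
    moreover have "g - 1 - (2*g - 1 - x) = x - g" using False assms by simp
    ultimately show ?thesis using low[OF lt] mid[of x] False assms g1 by auto
  qed
qed

lemma pseudo_nat: assumes "r = 1" "x \<le> 2*g - 2" "x \<noteq> g - 1" shows "(x \<in> S) \<noteq> (2*g - 2 - x \<in> S)"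
proof -
  have d: "a dvd (g - 2)" using r_props assms by (simp add: numeral_2_eq_2)
  have g2: "g \<ge> 2" using r_props assms by simp
  show ?thesis
  proof (cases "x < g")
    case True
    hence x: "x \<le> g - 2" using assms by simp
    have "2*g - 2 - x - g = g - 2 - x" by simp
    moreover have "a dvd (g - 2 - x) \<longleftrightarrow> a dvd x" using dvd_sub_iff[OF d] x by simp
    ultimately show ?thesis using low[OF True] mid[of "2*g - 2 - x"] x g2 by auto
  next
    case False
    have lt: "2*g - 2 - x < g" using False g2 by simp
    have "a dvd (g - 2 - (2*g - 2 - x)) \<longleftrightarrow> a dvd (2*g - 2 - x)" using dvd_sub_iff[OF d] lt False by simp
    moreover have "g - 2 - (2*g - 2 - x) = x - g" using False assms by simp
    ultimately show ?thesis using low[OF lt] mid[of x] False assms g2 by auto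
  qed
qed

lemma witness: assumes "r \<ge> 1" shows "g - 1 \<notin> S" "g - r \<notin> S"
proof -
  have g2: "g \<ge> 2" using r_props assms by simp
  have "\<not> a dvd (g - 1)" using assms by (simp add: r_def dvd_eq_mod_eq_0)
  thus "g - 1 \<notin> S" using low[of "g - 1"] g2 by simp
  have "g - r = (g - 1 - r) + 1" using r_props assms by simp
  moreover have "\<not> a dvd (g - 1 - r + 1)"
  proof
    assume "a dvd (g - 1 - r + 1)"
    hence "a dvd 1" using r_props(3) dvd_add_right_iff by blast
    thus False using a2 by simp
  qed
  ultimately show "g - r \<notin> S" using low[of "g - r"] assms g2 by simp
qed

lemma add_top: assumes "r \<ge> 2" shows "y \<in> S \<Longrightarrow> 0 < y \<Longrightarrow> g - 1 + y \<in> S" and "(g - 1) + (g - 1) \<in> S"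
proof -
  have g3: "g \<ge> 3" using r_props assms by simp
  show "y \<in> S \<Longrightarrow> 0 < y \<Longrightarrow> g - 1 + y \<in> S"
  proof -
    assume y: "y \<in> S" "0 < y"
    show ?thesis
    proof (cases "y < g")
      case True
      hence "a dvd y" using low y by simp
      have "\<not> a dvd (y - 1)"
      proof
        assume h: "a dvd (y - 1)"
        have "y = (y - 1) + 1" using y(2) by simp
        hence "a dvd (y - 1) + 1" using \<open>a dvd y\<close> by simp
        hence "a dvd 1" using h dvd_add_right_iff by blast
        thus False using a2 by simp
      qed
      moreover have "g - 1 + y - g = y - 1" using y g3 by simp
      ultimately show ?thesis using mid[of "g - 1 + y"] True y g3 by simp
    next
      case False
      have "g \<notin> S" using mid[of g] g3 by simp
      hence "y \<noteq> g" using y by blast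
      hence "y \<ge> g + 1" using False by linarith
      thus ?thesis using big by simp
    qed
  qed
  have "\<not> a dvd (g - 2)"
  proof
    assume "a dvd (g - 2)"
    hence "(g - 2 + 1) mod a = 1 mod a" by (simp add: dvd_eq_mod_eq_0 mod_Suc)
    moreover have "g - 2 + 1 = g - 1" using g3 by simp
    ultimately have "r = 1 mod a" by (simp add: r_def)
    thus False using assms a2 by simp
  qed
  moreover have "g - 1 + (g - 1) - g = g - 2" using g3 by simp
  ultimately show "(g - 1) + (g - 1) \<in> S" using mid[of "g - 1 + (g - 1)"] g3 by simp
qed

lemma cong1: "[g = 1] (mod a) \<longleftrightarrow> r = 0"
  using g1 by (simp add: cong_altdef_nat r_def dvd_eq_mod_eq_0)

lemma cong2: "[g = 2] (mod a) \<longleftrightarrow> r = 1"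
proof -
  have "(r + 1) mod a = (g - 1 + 1) mod a" unfolding r_def by (rule mod_add_left_eq)
  hence "g mod a = (r + 1) mod a" using g1 by simp
  moreover have "(r + 1) mod a = (if r + 1 = a then 0 else r + 1)" using r_props by auto
  ultimately have e: "g mod a = (if r + 1 = a then 0 else r + 1)" by simp
  have "[g = 2] (mod a) \<longleftrightarrow> g mod a = 2 mod a" by (simp add: cong_def)
  also have "\<dots> \<longleftrightarrow> (if r + 1 = a then 0 else r + 1) = 2 mod a" using e by simp
  also have "\<dots> \<longleftrightarrow> r = 1"
  proof (cases "a = 2")
    case True
    then show ?thesis using r_props by auto
  next
    case False
    hence "2 mod a = 2" using a2 by simp
    then show ?thesis using False by auto
  qed
  finally show ?thesis .
qed

end

theorem mainTheorem8:
  fixes S :: "nat set" and g a :: nat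
  assumes "reflective S" and "genus S = g" and "g \<ge> 1" and "multiplicity S = a"
  shows "(symmetric_ns S \<longleftrightarrow> [g = 1] (mod a))
       \<and> (pseudo_symmetric_ns S \<longleftrightarrow> [g = 2] (mod a))
       \<and> (irreducible_ns S \<longleftrightarrow> [g = 1] (mod a) \<or> [g = 2] (mod a))"
proof -
  interpret R: rfl S g a using assms by unfold_locales auto
  define F where "F = 2*g - 1 - R.r"
  have fr: "frobenius S = int F" using R.frob F_def by simp
  have up: "\<And>x. x > F \<Longrightarrow> x \<in> S" using R.gaps_le F_def by (meson not_le)
  have nF: "F \<notin> S" using R.top_gap F_def by simp
  have g1: "g \<ge> 1" by fact
  have sym: "symmetric_ns S \<longleftrightarrow> R.r = 0"
  proof
    assume s: "symmetric_ns S"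
    show "R.r = 0"
    proof (rule ccontr)
      assume "R.r \<noteq> 0"
      hence r1: "R.r \<ge> 1" by simp
      have "g - 1 \<le> F" "F - (g - 1) = g - R.r" using F_def R.r_props g1 by auto
      hence "(g - 1 \<in> S) \<noteq> (F - (g - 1) \<in> S)" using s sym_iff[OF fr up] by blast
      thus False using \<open>F - (g - 1) = g - R.r\<close> R.witness[OF r1] by simp
    qed
  next
    assume "R.r = 0"
    hence "F = 2*g - 1" using F_def by simp
    have "\<forall>x\<le>F. (x \<in> S) \<noteq> (F - x \<in> S)"
    proof (intro allI impI)
      fix x assume "x \<le> F"
      hence "x \<le> 2*g - 1" using \<open>F = 2*g - 1\<close> by simp
      from R.sym_nat[OF \<open>R.r = 0\<close> this] show "(x \<in> S) \<noteq> (F - x \<in> S)" unfolding \<open>F = 2*g - 1\<close> .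
    qed
    thus "symmetric_ns S" using sym_iff[OF fr up] by blast
  qed
  have pse: "pseudo_symmetric_ns S \<longleftrightarrow> R.r = 1"
  proof
    assume s: "pseudo_symmetric_ns S"
    show "R.r = 1"
    proof (rule ccontr)
      assume ne: "R.r \<noteq> 1"
      show False
      proof (cases "R.r = 0")
        case True
        hence "F = 2*g - 1" using F_def by simp
        hence "odd F" using g1 by simp
        thus False using s pseudo_iff[OF fr up] by simp
      next
        case False
        hence r2: "R.r \<ge> 2" using ne by simp
        hence r1: "R.r \<ge> 1" by simp
        have g3: "g \<ge> 3" using R.r_props r2 by simp
        have a: "g - 1 \<le> F" "F - (g - 1) = g - R.r" using F_def R.r_props g1 by auto
        have "g - 1 \<noteq> F div 2" using F_def r2 g3 by simp
        hence "(g - 1 \<in> S) \<noteq> (F - (g - 1) \<in> S)" using a(1) s pseudo_iff[OF fr up] by blast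
        thus False using a(2) R.witness[OF r1] by simp
      qed
    qed
  next
    assume r: "R.r = 1"
    hence "F = 2*g - 2" using F_def by simp
    moreover have "g \<ge> 2" using R.r_props r by simp
    ultimately have "even F" "F div 2 = g - 1" by auto
    moreover have "\<forall>x\<le>F. x \<noteq> F div 2 \<longrightarrow> (x \<in> S) \<noteq> (F - x \<in> S)"
    proof (intro allI impI)
      fix x assume "x \<le> F" "x \<noteq> F div 2"
      hence "x \<le> 2*g - 2" "x \<noteq> g - 1" using \<open>F = 2*g - 2\<close> \<open>F div 2 = g - 1\<close> by simp_all
      from R.pseudo_nat[OF r this] show "(x \<in> S) \<noteq> (F - x \<in> S)" unfolding \<open>F = 2*g - 2\<close> .
    qed
    ultimately show "pseudo_symmetric_ns S" using pseudo_iff[OF fr up] by blast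
  qed
  have irr: "irreducible_ns S \<longleftrightarrow> R.r = 0 \<or> R.r = 1"
  proof
    assume "R.r = 0 \<or> R.r = 1"
    then show "irreducible_ns S"
    proof
      assume r: "R.r = 0"
      have "F - x \<in> S \<or> 2*x = F" if "x < F" "x \<notin> S" for x
      proof -
        have "symmetric_ns S" using sym r by simp
        hence "(x \<in> S) \<noteq> (F - x \<in> S)" using that sym_iff[OF fr up] by (meson less_imp_le)
        thus ?thesis using that by blast
      qed
      thus ?thesis using irr_suff[OF R.ns nF up] by blast
    next
      assume r: "R.r = 1"
      hence ps: "pseudo_symmetric_ns S" using pse by simp
      have "F - x \<in> S \<or> 2*x = F" if "x < F" "x \<notin> S" for x
      proof (cases "x = F div 2")
        case True
        moreover have "even F" using ps pseudo_iff[OF fr up] by blast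
        ultimately show ?thesis by simp
      next
        case False
        hence "(x \<in> S) \<noteq> (F - x \<in> S)" using that ps pseudo_iff[OF fr up] by (meson less_imp_le)
        thus ?thesis using that by blast
      qed
      thus ?thesis using irr_suff[OF R.ns nF up] by blast
    qed
  next
    assume irr: "irreducible_ns S"
    show "R.r = 0 \<or> R.r = 1"
    proof (rule ccontr)
      assume "\<not> (R.r = 0 \<or> R.r = 1)"
      hence r2: "R.r \<ge> 2" by simp
      have g3: "g \<ge> 3" using R.r_props r2 by simp
      define S1 where "S1 = insert F S"
      define S2 where "S2 = insert (g - 1) S"
      have fin: "finite (UNIV - S)" by (rule R.fin)
      have F0: "F > 0" using F_def g3 R.r_props by simp
      have ns1: "numerical_semigroup S1"
        unfolding numerical_semigroup_def S1_def
      proof (intro conjI ballI)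
        show "0 \<in> insert F S" using R.zero_in by simp
        show "finite (UNIV - insert F S)" using fin by (rule finite_subset[rotated]) auto
        fix x y assume x: "x \<in> insert F S" and y: "y \<in> insert F S"
        show "x + y \<in> insert F S"
        proof (cases "x = F")
          case True
          show ?thesis
          proof (cases "y = 0")
            case True thus ?thesis using \<open>x = F\<close> by simp
          next
            case False thus ?thesis using \<open>x = F\<close> up by simp
          qed
        next
          case xF: False
          show ?thesis
          proof (cases "y = F")
            case True
            show ?thesis
            proof (cases "x = 0")
              case True thus ?thesis using \<open>y = F\<close> by simp
            next
              case False thus ?thesis using \<open>y = F\<close> up by simp
            qed
          next
            case False thus ?thesis using xF x y R.add_in by simp
          qed
        qed
      qed
      have ns2: "numerical_semigroup S2"
        unfolding numerical_semigroup_def S2_def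
      proof (intro conjI ballI)
        show "0 \<in> insert (g - 1) S" using R.zero_in by simp
        show "finite (UNIV - insert (g - 1) S)" using fin by (rule finite_subset[rotated]) auto
        fix x y assume x: "x \<in> insert (g - 1) S" and y: "y \<in> insert (g - 1) S"
        show "x + y \<in> insert (g - 1) S"
        proof (cases "x = g - 1")
          case True
          show ?thesis
          proof (cases "y = g - 1")
            case True thus ?thesis using \<open>x = g - 1\<close> R.add_top[OF r2] by simp
          next
            case False
            hence "y \<in> S" using y by simp
            thus ?thesis using \<open>x = g - 1\<close> R.add_top(1)[OF r2, of y] by (cases "y = 0") auto
          qed
        next
          case xF: False
          hence xS: "x \<in> S" using x by simp
          show ?thesis
          proof (cases "y = g - 1")
            case True
            thus ?thesis using xS R.add_top(1)[OF r2, of x] by (cases "x = 0") (auto simp: add.commute)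
          next
            case False thus ?thesis using xS y R.add_in by simp
          qed
        qed
      qed
      have w: "g - 1 \<notin> S" using R.witness r2 by simp
      have "g - 1 \<noteq> F" using F_def R.r_props g3 by simp
      hence "S = S1 \<inter> S2" unfolding S1_def S2_def using nF w by auto
      moreover have "S \<subset> S1" "S \<subset> S2" unfolding S1_def S2_def using nF w by auto
      ultimately show False using irr ns1 ns2 unfolding irreducible_ns_def by blast
    qed
  qed
  show ?thesis using sym pse irr R.cong1 R.cong2 by simp
qed

end
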